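(* Let $\alpha>1$ and $k\ge 0$ be an integer. Let $P\subset\mathbb{R}^1$ be a finite point set containing the source $s$ and let $q\in\mathbb{R}^1$ be a point with $q\notin P$. Let $\rho_{\mathrm{old}}(p)$ be the range of a point $p$ in the canonical range assignment $\rho_k(P)$ and let $\rho_{\mathrm{new}}(p)$ be the range of $p$ in $\rho_k(P\cup\{q\})$ (with the range of a point not in the set being $0$). Then $$\big|\{p\in P\cup\{q\}:\rho_{\mathrm{new}}(p)>\rho_{\mathrm{old}}(p)\}\big|\le k+3\quad\text{and}\quad \big|\{p\in P\cup\{q\}:\rho_{\mathrm{new}}(p)<\rho_{\mathrm{old}}(p)\}\big|\le k+3.$$
   Context: Setting: points in $\mathbb{R}^1$ with distance $|pq|$; a range assignment $\rho$ on a finite set $P$ containing source $s$ induces the directed graph with edge $(p,q)$ iff $|pq|\le\rho(p)$; it is feasible if this graph contains an arborescence rooted at $s$ spanning $P$; its cost is $\sum_p\rho(p)^\alpha$ with $\alpha>1$. Write $P=L\cup\{s\}\cup R$, where $L=\{\ell_1,\dots,\ell_{|L|}\}$ are the points left of $s$ and $R=\{r_1,\dots,r_{|R|}\}$ the points right of $s$, each numbered by increasing distance from $s$. $\ell_{|L|}$ and $r_{|R|}$ are extreme points. The successor of $r_i$ (non-extreme) is $r_{i+1}$, of $\ell_i$ is $\ell_{i+1}$; $s$ has successors $r_1$ and $\ell_1$; extreme points have no successor. A chain is a path in the communication graph using only edges from a point to its successor. The standard range $\rho_{\mathrm{st}}(p)$ of a non-extreme $p\neq s$ is its distance to its successor;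 of an extreme point it is $0$; $s$ has the two standard ranges $|s\ell_1|,|sr_1|$. A zero-range point is a non-extreme point with range $0$. For a broadcast tree $\mathcal{B}$ (arborescence rooted at $s$), a point of $R\cup L$ is root-crossing if it has a child on the other side of $s$; $s$ is root-crossing if it has a child in $L$ and one in $R$. Structured optimal assignment $\rho_{\mathrm{opt}}$: if all points of $P\setminus\{s\}$ lie on one side of $s$, $\rho_{\mathrm{opt}}$ gives each point its standard range (a chain from $s$ to the extreme point); otherwise $\rho_{\mathrm{opt}}$ is a minimum-cost feasible assignment whose graph contains a broadcast tree $\mathcal{B}$ with: a single root-crossing point $p^*$; a chain from $s$ to $p^*$; all points within reach of $p^*$ (i.e. at distance $\le\rho_{\mathrm{opt}}(p^* )$), except those on the chain from $s$ to $p^*$, are children of $p^*$; and, with $r_i,\ell_j$ the rightmost and leftmost points within reach of $p^*$, chains from $r_i$ to $r_{|R|}$ and from $\ell_j$ to $\ell_{|L|}$ (such an optimal assignment always exists). For each point set a fixed such $\rho_{\mathrm{opt}}$ is used. Canonical range assignment $\rho_k$: if all points of $P$ lie on one side of $s$, $\rho_k=\rho_{\mathrm{opt}}$. Otherwise let $Z$ be the set of zero-range points in $\rho_{\mathrm{opt}}(P)$; let $Z_k=Z$ if $|Z|\le k$, and otherwise let $Z_k\subseteq Z$ be the $k$ points of $Z$ with largest standard ranges (ties broken arbitrarily). Then $\rho_k(p)=\rho_{\mathrm{opt}}(p)$ for $p\in P\setminus Z$, $\rho_k(p)=0$ for $p\in Z_k$, and $\rho_k(p)=\rho_{\mathrm{st}}(p)$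 for $p\in Z\setminus Z_k$. *)

theory Defs
  imports Complex_Main
begin

definition left_pts :: "real set \<Rightarrow> real \<Rightarrow> real set" where
  "left_pts P s = {p \<in> P. p < s}"

definition right_pts :: "real set \<Rightarrow> real \<Rightarrow> real set" where
  "right_pts P s = {p \<in> P. p > s}"

definition is_extreme :: "real set \<Rightarrow> real \<Rightarrow> real \<Rightarrow> bool" where
  "is_extreme P s p \<longleftrightarrow>
     (p \<in> right_pts P s \<and> p = Max (right_pts P s)) \<or>
     (p \<in> left_pts P s \<and> p = Min (left_pts P s))"

definition succ_pt :: "real set \<Rightarrow> real \<Rightarrow> real \<Rightarrow> real" where
  "succ_pt P s p = (if p > s then Min {x \<in> P. x > p} else Max {x \<in> P. x < p})"

definition pred_pt :: "real set \<Rightarrow> real \<Rightarrow> real \<Rightarrow> real" where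
  "pred_pt P s x = (if x > s then Max {y \<in> P. y < x} else Min {y \<in> P. y > x})"

definition std_range :: "real set \<Rightarrow> real \<Rightarrow> real \<Rightarrow> real" where
  "std_range P s p =
     (if p \<in> P \<and> p \<noteq> s \<and> \<not> is_extreme P s p then \<bar>succ_pt P s p - p\<bar> else 0)"

definition range_assignment :: "real set \<Rightarrow> (real \<Rightarrow> real) \<Rightarrow> bool" where
  "range_assignment P \<rho> \<longleftrightarrow> (\<forall>p\<in>P. \<rho> p \<ge> 0) \<and> (\<forall>p. p \<notin> P \<longrightarrow> \<rho> p = 0)"

definition cost :: "real \<Rightarrow> real set \<Rightarrow> (real \<Rightarrow> real) \<Rightarrow> real" where
  "cost \<alpha> P \<rho> = (\<Sum>p\<in>P. \<rho> p powr \<alpha>)"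

text \<open>Broadcast tree (arborescence rooted at s spanning P) in the communication graph of \<rho>,
  given by a parent function: every p \<noteq> s in P has a parent in P which reaches p, and
  iterating the parent function from any point of P reaches s.\<close>
definition is_btree :: "real set \<Rightarrow> real \<Rightarrow> (real \<Rightarrow> real) \<Rightarrow> (real \<Rightarrow> real) \<Rightarrow> bool" where
  "is_btree P s \<rho> par \<longleftrightarrow>
     (\<forall>x \<in> P - {s}. par x \<in> P \<and> par x \<noteq> x \<and> \<bar>x - par x\<bar> \<le> \<rho> (par x)) \<and>
     (\<forall>x \<in> P. \<exists>n. (par ^^ n) x = s)"

definition feasible :: "real set \<Rightarrow> real \<Rightarrow> (real \<Rightarrow> real) \<Rightarrow> bool" where
  "feasible P s \<rho> \<longleftrightarrow> (\<exists>par. is_btree P s \<rho> par)"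

definition min_cost_feasible :: "real \<Rightarrow> real set \<Rightarrow> real \<Rightarrow> (real \<Rightarrow> real) \<Rightarrow> bool" where
  "min_cost_feasible \<alpha> P s \<rho> \<longleftrightarrow>
     range_assignment P \<rho> \<and> feasible P s \<rho> \<and>
     (\<forall>\<rho>'. range_assignment P \<rho>' \<and> feasible P s \<rho>' \<longrightarrow> cost \<alpha> P \<rho> \<le> cost \<alpha> P \<rho>')"

definition one_sided :: "real set \<Rightarrow> real \<Rightarrow> bool" where
  "one_sided P s \<longleftrightarrow> left_pts P s = {} \<or> right_pts P s = {}"

definition std_assignment :: "real set \<Rightarrow> real \<Rightarrow> real \<Rightarrow> real" where
  "std_assignment P s p =
     (if p = s \<and> s \<in> P then
        (if right_pts P s \<noteq> {} then Min (right_pts P s) - s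
         else if left_pts P s \<noteq> {} then s - Max (left_pts P s) else 0)
      else std_range P s p)"

definition root_crossing :: "real set \<Rightarrow> real \<Rightarrow> (real \<Rightarrow> real) \<Rightarrow> real \<Rightarrow> bool" where
  "root_crossing P s par p \<longleftrightarrow>
     (p = s \<and> (\<exists>c \<in> left_pts P s. par c = s) \<and> (\<exists>c \<in> right_pts P s. par c = s)) \<or>
     (p \<in> right_pts P s \<and> (\<exists>c \<in> left_pts P s. par c = p)) \<or>
     (p \<in> left_pts P s \<and> (\<exists>c \<in> right_pts P s. par c = p))"

definition on_chain :: "real \<Rightarrow> real \<Rightarrow> real \<Rightarrow> bool" where
  "on_chain s pstar x \<longleftrightarrow> min s pstar \<le> x \<and> x \<le> max s pstar"

definition structured_opt :: "real \<Rightarrow> real set \<Rightarrow> real \<Rightarrow> (real \<Rightarrow> real) \<Rightarrow> bool" where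
  "structured_opt \<alpha> P s \<rho> \<longleftrightarrow>
     (if one_sided P s then \<rho> = std_assignment P s
      else min_cost_feasible \<alpha> P s \<rho> \<and>
        (\<exists>par pstar. is_btree P s \<rho> par \<and> pstar \<in> P \<and>
          (\<forall>p \<in> P. root_crossing P s par p \<longleftrightarrow> p = pstar) \<and>
          (\<forall>x \<in> P. x \<noteq> s \<and> on_chain s pstar x \<longrightarrow> par x = pred_pt P s x) \<and>
          (\<forall>x \<in> P. x \<noteq> pstar \<and> \<bar>x - pstar\<bar> \<le> \<rho> pstar \<and> \<not> on_chain s pstar x
                      \<longrightarrow> par x = pstar) \<and>
          (\<forall>x \<in> P. x > Max {y \<in> P. \<bar>y - pstar\<bar> \<le> \<rho> pstar} \<longrightarrow> par x = pred_pt P s x) \<and>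
          (\<forall>x \<in> P. x < Min {y \<in> P. \<bar>y - pstar\<bar> \<le> \<rho> pstar} \<longrightarrow> par x = pred_pt P s x)))"

definition zero_pts :: "real set \<Rightarrow> real \<Rightarrow> (real \<Rightarrow> real) \<Rightarrow> real set" where
  "zero_pts P s \<rho> = {p \<in> P. p \<noteq> s \<and> \<not> is_extreme P s p \<and> \<rho> p = 0}"

definition valid_Zk :: "nat \<Rightarrow> real set \<Rightarrow> real \<Rightarrow> real set \<Rightarrow> real set \<Rightarrow> bool" where
  "valid_Zk k P s Z Zk \<longleftrightarrow> Zk \<subseteq> Z \<and>
     (card Z \<le> k \<longrightarrow> Zk = Z) \<and>
     (card Z > k \<longrightarrow> card Zk = k \<and>
        (\<forall>a \<in> Zk. \<forall>b \<in> Z - Zk. std_range P s b \<le> std_range P s a))"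

text \<open>\<rho> is a canonical range assignment rho_k(P), for some admissible choice of the
  structured optimal assignment and of Z_k.\<close>
definition canonical :: "real \<Rightarrow> nat \<Rightarrow> real set \<Rightarrow> real \<Rightarrow> (real \<Rightarrow> real) \<Rightarrow> bool" where
  "canonical \<alpha> k P s \<rho> \<longleftrightarrow>
     (\<exists>\<rho>opt. structured_opt \<alpha> P s \<rho>opt \<and>
       (if one_sided P s then \<rho> = \<rho>opt
        else (\<exists>Zk. valid_Zk k P s (zero_pts P s \<rho>opt) Zk \<and>
               \<rho> = (\<lambda>p. if p \<in> zero_pts P s \<rho>opt - Zk then std_range P s p else \<rho>opt p))))"

end

theory Submission
  imports Defs
begin

lemma std_nonneg: "std_range P s x \<ge> 0"
  unfolding std_range_def by auto

lemma std_right: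
  assumes "finite P" "x \<in> P" "x > s"
  shows "std_range P s x = (if {z\<in>P. z>x} = {} then 0 else Min {z\<in>P. z>x} - x)"
proof -
  have ext: "is_extreme P s x \<longleftrightarrow> {z\<in>P. z>x} = {}"
  proof
    assume "is_extreme P s x"
    then have "x = Max (right_pts P s)" using assms unfolding is_extreme_def left_pts_def by auto
    moreover have "finite (right_pts P s)" using assms unfolding right_pts_def by auto
    ultimately show "{z\<in>P. z>x} = {}" using assms unfolding right_pts_def
      by (smt (verit, del_insts) Max_ge empty_Collect_eq mem_Collect_eq)
  next
    assume h: "{z\<in>P. z>x} = {}"
    have "finite (right_pts P s)" using assms unfolding right_pts_def by auto
    moreover have "x \<in> right_pts P s" using assms unfolding right_pts_def by auto
    ultimately have "x = Max (right_pts P s)" using h unfolding right_pts_def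
      by (intro antisym Max_ge) (auto intro!: Max.boundedI simp: not_less)
    then show "is_extreme P s x" using assms unfolding is_extreme_def right_pts_def by auto
  qed
  show ?thesis
  proof (cases "{z\<in>P. z>x} = {}")
    case True then show ?thesis using ext assms unfolding std_range_def by auto
  next
    case False
    have "Min {z\<in>P. z>x} \<in> {z\<in>P. z>x}" using False assms by (intro Min_in) auto
    then show ?thesis using False ext assms unfolding std_range_def succ_pt_def by auto
  qed
qed

lemma std_left:
  assumes "finite P" "x \<in> P" "x < s"
  shows "std_range P s x = (if {z\<in>P. z<x} = {} then 0 else x - Max {z\<in>P. z<x})"
proof -
  have ext: "is_extreme P s x \<longleftrightarrow> {z\<in>P. z<x} = {}"
  proof
    assume "is_extreme P s x"
    then have "x = Min (left_pts P s)" using assms unfolding is_extreme_def right_pts_def by auto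
    moreover have "finite (left_pts P s)" using assms unfolding left_pts_def by auto
    ultimately show "{z\<in>P. z<x} = {}" using assms unfolding left_pts_def
      by (smt (verit, del_insts) Min_le empty_Collect_eq mem_Collect_eq)
  next
    assume h: "{z\<in>P. z<x} = {}"
    have "finite (left_pts P s)" using assms unfolding left_pts_def by auto
    moreover have "x \<in> left_pts P s" using assms unfolding left_pts_def by auto
    ultimately have "x = Min (left_pts P s)" using h unfolding left_pts_def
      by (intro antisym Min_le) (auto intro!: Min.boundedI simp: not_less)
    then show "is_extreme P s x" using assms unfolding is_extreme_def left_pts_def by auto
  qed
  show ?thesis
  proof (cases "{z\<in>P. z<x} = {}")
    case True then show ?thesis using ext assms unfolding std_range_def by auto
  next
    case False
    have "Max {z\<in>P. z<x} \<in> {z\<in>P. z<x}" using False assms by (intro Max_in) auto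
    then show ?thesis using False ext assms unfolding std_range_def succ_pt_def by auto
  qed
qed


lemma T1_right:
  assumes "finite P" "x \<in> P" "x > s" "q \<notin> P"
    and "std_range (insert q P) s x > std_range P s x"
  shows "x < q \<and> (\<forall>z\<in>P. z \<le> x)"
proof -
  have x': "x \<in> insert q P" using assms by auto
  have fin': "finite (insert q P)" using assms by auto
  note e1 = std_right[OF assms(1-3)] and e2 = std_right[OF fin' x' assms(3)]
  show ?thesis
  proof (cases "q > x")
    case False
    then have eqs: "{z\<in>insert q P. z>x} = {z\<in>P. z>x}" by auto
    have "std_range (insert q P) s x = std_range P s x" unfolding e1 e2 by (simp only: eqs)
    then show ?thesis using assms(5) by simp
  next
    case True
    have A: "{z\<in>insert q P. z>x} = insert q {z\<in>P. z>x}" using True by auto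
    show ?thesis
    proof (cases "{z\<in>P. z>x} = {}")
      case True then show ?thesis using \<open>q > x\<close> by (auto simp: not_less)
    next
      case False
      have "Min (insert q {z\<in>P. z>x}) \<le> Min {z\<in>P. z>x}"
        using False assms(1) by (simp add: Min_insert)
      moreover have "std_range (insert q P) s x = Min (insert q {z\<in>P. z>x}) - x" using e2 unfolding A by simp
      moreover have "std_range P s x = Min {z\<in>P. z>x} - x" by (simp only: e1 False if_False)
      ultimately show ?thesis using assms(5) by simp
    qed
  qed
qed

lemma T1_left:
  assumes "finite P" "x \<in> P" "x < s" "q \<notin> P"
    and "std_range (insert q P) s x > std_range P s x"
  shows "q < x \<and> (\<forall>z\<in>P. x \<le> z)"
proof -
  have x': "x \<in> insert q P" using assms by auto
  have fin': "finite (insert q P)" using assms by auto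
  note e1 = std_left[OF assms(1-3)] and e2 = std_left[OF fin' x' assms(3)]
  show ?thesis
  proof (cases "q < x")
    case False
    then have eqs: "{z\<in>insert q P. z<x} = {z\<in>P. z<x}" by auto
    have "std_range (insert q P) s x = std_range P s x" unfolding e1 e2 by (simp only: eqs)
    then show ?thesis using assms(5) by simp
  next
    case True
    have A: "{z\<in>insert q P. z<x} = insert q {z\<in>P. z<x}" using True by auto
    show ?thesis
    proof (cases "{z\<in>P. z<x} = {}")
      case True then show ?thesis using \<open>q < x\<close> by (auto simp: not_less)
    next
      case False
      have "Max (insert q {z\<in>P. z<x}) \<ge> Max {z\<in>P. z<x}"
        using False assms(1) by (simp add: Max_insert)
      moreover have "std_range (insert q P) s x = x - Max (insert q {z\<in>P. z<x})" using e2 unfolding A by simp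
      moreover have "std_range P s x = x - Max {z\<in>P. z<x}" by (simp only: e1 False if_False)
      ultimately show ?thesis using assms(5) by simp
    qed
  qed
qed

lemma T2_right:
  assumes "finite P" "x \<in> P" "x > s" "q \<notin> P"
    and "std_range (insert q P) s x < std_range P s x"
  shows "x < q \<and> (\<forall>z\<in>P. z > x \<longrightarrow> q < z)"
proof -
  have x': "x \<in> insert q P" using assms by auto
  have fin': "finite (insert q P)" using assms by auto
  note e1 = std_right[OF assms(1-3)] and e2 = std_right[OF fin' x' assms(3)]
  show ?thesis
  proof (cases "q > x")
    case False
    then have eqs: "{z\<in>insert q P. z>x} = {z\<in>P. z>x}" by auto
    have "std_range (insert q P) s x = std_range P s x" unfolding e1 e2 by (simp only: eqs)
    then show ?thesis using assms(5) by simp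
  next
    case True
    have A: "{z\<in>insert q P. z>x} = insert q {z\<in>P. z>x}" using True by auto
    show ?thesis
    proof (cases "{z\<in>P. z>x} = {}")
      case True then show ?thesis using assms(5) e1 e2 A  std_nonneg[of "insert q P" s x] by simp
    next
      case False
      have m: "Min (insert q {z\<in>P. z>x}) = min q (Min {z\<in>P. z>x})"
        using False assms(1) by (simp add: Min_insert)
      have "std_range (insert q P) s x = min q (Min {z\<in>P. z>x}) - x" using e2 m unfolding A by simp
      moreover have "std_range P s x = Min {z\<in>P. z>x} - x" by (simp only: e1 False if_False)
      ultimately have "q < Min {z\<in>P. z>x}" using assms(5) by (simp add: min_def split: if_splits)
      moreover have "\<forall>z\<in>P. z > x \<longrightarrow> Min {z\<in>P. z>x} \<le> z" using assms(1) by auto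
      ultimately show ?thesis using True by force
    qed
  qed
qed

lemma T2_left:
  assumes "finite P" "x \<in> P" "x < s" "q \<notin> P"
    and "std_range (insert q P) s x < std_range P s x"
  shows "q < x \<and> (\<forall>z\<in>P. z < x \<longrightarrow> z < q)"
proof -
  have x': "x \<in> insert q P" using assms by auto
  have fin': "finite (insert q P)" using assms by auto
  note e1 = std_left[OF assms(1-3)] and e2 = std_left[OF fin' x' assms(3)]
  show ?thesis
  proof (cases "q < x")
    case False
    then have eqs: "{z\<in>insert q P. z<x} = {z\<in>P. z<x}" by auto
    have "std_range (insert q P) s x = std_range P s x" unfolding e1 e2 by (simp only: eqs)
    then show ?thesis using assms(5) by simp
  next
    case True
    have A: "{z\<in>insert q P. z<x} = insert q {z\<in>P. z<x}" using True by auto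
    show ?thesis
    proof (cases "{z\<in>P. z<x} = {}")
      case True then show ?thesis using assms(5) e1 e2 A  std_nonneg[of "insert q P" s x] by simp
    next
      case False
      have m: "Max (insert q {z\<in>P. z<x}) = max q (Max {z\<in>P. z<x})"
        using False assms(1) by (simp add: Max_insert)
      have "std_range (insert q P) s x = x - max q (Max {z\<in>P. z<x})" using e2 m unfolding A by simp
      moreover have "std_range P s x = x - Max {z\<in>P. z<x}" by (simp only: e1 False if_False)
      ultimately have "q > Max {z\<in>P. z<x}" using assms(5) by (simp add: max_def split: if_splits)
      moreover have "\<forall>z\<in>P. z < x \<longrightarrow> z \<le> Max {z\<in>P. z<x}" using assms(1) by auto
      ultimately show ?thesis using True by force
    qed
  qed
qed

lemma T1_card:
  assumes "finite P" "s \<in> P" "q \<notin> P"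
  shows "card {x\<in>P-{s}. std_range (insert q P) s x > std_range P s x} \<le> 1"
proof -
  let ?T = "{x\<in>P-{s}. std_range (insert q P) s x > std_range P s x}"
  have c: "x > s \<and> x < q \<and> (\<forall>z\<in>P. z \<le> x) \<or> x < s \<and> q < x \<and> (\<forall>z\<in>P. x \<le> z)" if "x \<in> ?T" for x
  proof -
    have x: "x \<in> P" "x \<noteq> s" "std_range (insert q P) s x > std_range P s x" using that by auto
    show ?thesis
    proof (cases "x > s")
      case True then show ?thesis using T1_right[OF assms(1) x(1) True assms(3) x(3)] by simp
    next
      case False then have "x < s" using x(2) by simp
      then show ?thesis using T1_left[OF assms(1) x(1) _ assms(3) x(3)] by simp
    qed
  qed
  have "\<forall>x\<in>?T. \<forall>y\<in>?T. x = y"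
  proof (intro ballI)
    fix x y assume "x \<in> ?T" "y \<in> ?T"
    with c[OF this(1)] c[OF this(2)] show "x = y" using \<open>x \<in> ?T\<close> \<open>y \<in> ?T\<close> by (smt (verit) mem_Collect_eq Diff_iff)
  qed
  then show ?thesis using assms by (simp add: card_le_Suc0_iff_eq)
qed

lemma T1_q:
  assumes "finite P" "s \<in> P" "q \<notin> P"
    and "{x\<in>P-{s}. std_range (insert q P) s x > std_range P s x} \<noteq> {}"
  shows "std_range (insert q P) s q = 0"
proof -
  obtain x where x: "x \<in> P" "x \<noteq> s" "std_range (insert q P) s x > std_range P s x" using assms(4) by auto
  have fin': "finite (insert q P)" using assms by auto
  show ?thesis
  proof (cases "x > s")
    case True
    with T1_right[OF assms(1) x(1) True assms(3) x(3)] have h: "x < q" "\<forall>z\<in>P. z \<le> x" by auto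
    have "{z\<in>insert q P. z>q} = {}" using h by force
    then show ?thesis using std_right[OF fin' _, of q s] h True by simp
  next
    case False
    then have F: "x < s" using x by auto
    with T1_left[OF assms(1) x(1) F assms(3) x(3)] have h: "q < x" "\<forall>z\<in>P. x \<le> z" by auto
    have "{z\<in>insert q P. z<q} = {}" using h by force
    then show ?thesis using std_left[OF fin' _, of q s] h F by simp
  qed
qed

lemma T2_card:
  assumes "finite P" "s \<in> P" "q \<notin> P"
  shows "card {x\<in>P-{s}. std_range (insert q P) s x < std_range P s x} \<le> 1"
proof -
  let ?T = "{x\<in>P-{s}. std_range (insert q P) s x < std_range P s x}"
  have c: "x > s \<and> x < q \<and> (\<forall>z\<in>P. z > x \<longrightarrow> q < z) \<or> x < s \<and> q < x \<and> (\<forall>z\<in>P. z < x \<longrightarrow> z < q)" if "x \<in> ?T" for x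
  proof -
    have x: "x \<in> P" "x \<noteq> s" "std_range (insert q P) s x < std_range P s x" using that by auto
    show ?thesis
    proof (cases "x > s")
      case True then show ?thesis using T2_right[OF assms(1) x(1) True assms(3) x(3)] by simp
    next
      case False then have "x < s" using x(2) by simp
      then show ?thesis using T2_left[OF assms(1) x(1) _ assms(3) x(3)] by simp
    qed
  qed
  have "\<forall>x\<in>?T. \<forall>y\<in>?T. x = y"
  proof (intro ballI)
    fix x y assume "x \<in> ?T" "y \<in> ?T"
    with c[OF this(1)] c[OF this(2)] show "x = y" using \<open>x \<in> ?T\<close> \<open>y \<in> ?T\<close> by (smt (verit) mem_Collect_eq Diff_iff)
  qed
  then show ?thesis using assms by (simp add: card_le_Suc0_iff_eq)
qed

lemma pred_std:
  assumes "finite P" "s \<in> P" "x \<in> P" "y \<in> P" "x \<noteq> s" "y \<noteq> s" "pred_pt P s y = x"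
  shows "std_range P s x = \<bar>y - x\<bar>"
proof (cases "y > s")
  case True
  let ?B = "{z\<in>P. z<y}"
  have fB: "finite ?B" "?B \<noteq> {}" using assms True by auto
  have xB: "x = Max ?B" using assms True unfolding pred_pt_def by simp
  have "x \<in> ?B" using xB Max_in[OF fB] by simp
  have "s \<le> x" using xB fB assms True by (simp add: Max_ge_iff)
  then have xs: "x > s" using assms by simp
  let ?A = "{z\<in>P. z>x}"
  have yA: "y \<in> ?A" using \<open>x \<in> ?B\<close> assms by auto
  have fA: "finite ?A" "?A \<noteq> {}" using assms yA by auto
  have "Min ?A = y"
  proof (rule antisym)
    show "Min ?A \<le> y" using yA fA by simp
    have m: "Min ?A \<in> ?A" using Min_in[OF fA] .
    show "y \<le> Min ?A"
    proof (rule ccontr)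
      assume "\<not> y \<le> Min ?A"
      then have "Min ?A \<in> ?B" using m by auto
      then have "Min ?A \<le> x" using xB fB by simp
      then show False using m by simp
    qed
  qed
  then show ?thesis using std_right[OF assms(1,3) xs] fA yA \<open>x \<in> ?B\<close> by auto
next
  case False
  then have ys: "y < s" using assms by simp
  let ?B = "{z\<in>P. z>y}"
  have fB: "finite ?B" "?B \<noteq> {}" using assms ys by auto
  have xB: "x = Min ?B" using assms False unfolding pred_pt_def by simp
  have "x \<in> ?B" using xB Min_in[OF fB] by simp
  have "x \<le> s" using xB fB assms ys by (simp add: Min_le_iff)
  then have xs: "x < s" using assms by simp
  let ?A = "{z\<in>P. z<x}"
  have yA: "y \<in> ?A" using \<open>x \<in> ?B\<close> assms by auto
  have fA: "finite ?A" "?A \<noteq> {}" using assms yA by auto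
  have "Max ?A = y"
  proof (rule antisym)
    show "y \<le> Max ?A" using yA fA by simp
    have m: "Max ?A \<in> ?A" using Max_in[OF fA] .
    show "Max ?A \<le> y"
    proof (rule ccontr)
      assume "\<not> Max ?A \<le> y"
      then have "Max ?A \<in> ?B" using m by auto
      then have "x \<le> Max ?A" using xB fB by simp
      then show False using m by simp
    qed
  qed
  then show ?thesis using std_left[OF assms(1,3) xs] fA yA \<open>x \<in> ?B\<close> by auto
qed

lemma succ_exists:
  assumes "finite P" "s \<in> P" "x \<in> P" "x \<noteq> s" "std_range P s x > 0"
  shows "\<exists>y\<in>P. y \<noteq> s \<and> pred_pt P s y = x \<and> \<bar>y - x\<bar> = std_range P s x"
proof (cases "x > s")
  case True
  let ?A = "{z\<in>P. z>x}"
  have ne: "?A \<noteq> {}" using std_right[OF assms(1,3) True] assms(5) by (auto split: if_splits)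
  have fA: "finite ?A" using assms by auto
  define y where "y = Min ?A"
  have yA: "y \<in> ?A" using Min_in[OF fA ne] y_def by simp
  have st: "std_range P s x = y - x" by (simp only: std_right[OF assms(1,3) True] ne if_False y_def)
  let ?B = "{z\<in>P. z<y}"
  have fB: "finite ?B" "x \<in> ?B" using assms yA by auto
  have "Max ?B = x"
  proof (rule antisym)
    show "x \<le> Max ?B" using fB by simp
    show "Max ?B \<le> x"
    proof (rule ccontr)
      assume a: "\<not> Max ?B \<le> x"
      have "Max ?B \<in> ?B" using Max_in[OF fB(1)] fB(2) by blast
      then have "Max ?B \<in> ?A" using a by auto
      then have "y \<le> Max ?B" using y_def fA by simp
      then show False using \<open>Max ?B \<in> ?B\<close> by simp
    qed
  qed
  then have "pred_pt P s y = x" using yA True unfolding pred_pt_def by auto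
  then show ?thesis using yA True st by (intro bexI[of _ y]) auto
next
  case False
  then have xs: "x < s" using assms by simp
  let ?A = "{z\<in>P. z<x}"
  have ne: "?A \<noteq> {}" using std_left[OF assms(1,3) xs] assms(5) by (auto split: if_splits)
  have fA: "finite ?A" using assms by auto
  define y where "y = Max ?A"
  have yA: "y \<in> ?A" using Max_in[OF fA ne] y_def by simp
  have st: "std_range P s x = x - y" by (simp only: std_left[OF assms(1,3) xs] ne if_False y_def)
  let ?B = "{z\<in>P. z>y}"
  have fB: "finite ?B" "x \<in> ?B" using assms yA by auto
  have "Min ?B = x"
  proof (rule antisym)
    show "Min ?B \<le> x" using fB by simp
    show "x \<le> Min ?B"
    proof (rule ccontr)
      assume a: "\<not> x \<le> Min ?B"
      have "Min ?B \<in> ?B" using Min_in[OF fB(1)] fB(2) by blast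
      then have "Min ?B \<in> ?A" using a by auto
      then have "Min ?B \<le> y" using y_def fA by simp
      then show False using \<open>Min ?B \<in> ?B\<close> by simp
    qed
  qed
  then have "pred_pt P s y = x" using yA xs unfolding pred_pt_def by auto
  then show ?thesis using yA xs st by (intro bexI[of _ y]) auto
qed

lemma par_cases:
  assumes "finite P" "is_btree P s \<rho> par" "pstar \<in> P" "\<rho> pstar \<ge> 0"
    and ch: "\<forall>x\<in>P. x \<noteq> s \<and> on_chain s pstar x \<longrightarrow> par x = pred_pt P s x"
    and re: "\<forall>x\<in>P. x \<noteq> pstar \<and> \<bar>x - pstar\<bar> \<le> \<rho> pstar \<and> \<not> on_chain s pstar x \<longrightarrow> par x = pstar"
    and bR: "\<forall>x\<in>P. x > Max {y\<in>P. \<bar>y - pstar\<bar> \<le> \<rho> pstar} \<longrightarrow> par x = pred_pt P s x"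
    and bL: "\<forall>x\<in>P. x < Min {y\<in>P. \<bar>y - pstar\<bar> \<le> \<rho> pstar} \<longrightarrow> par x = pred_pt P s x"
    and y: "y \<in> P" "y \<noteq> s"
  shows "par y = pred_pt P s y \<or> par y = pstar"
proof -
  let ?R = "{y\<in>P. \<bar>y - pstar\<bar> \<le> \<rho> pstar}"
  have fR: "finite ?R" "pstar \<in> ?R" using assms by auto
  show ?thesis
  proof (cases "on_chain s pstar y")
    case True then show ?thesis using ch y by auto
  next
    case nc: False
    then have yp: "y \<noteq> pstar" unfolding on_chain_def by auto
    show ?thesis
    proof (cases "\<bar>y - pstar\<bar> \<le> \<rho> pstar")
      case True then show ?thesis using re y yp nc by auto
    next
      case False
      show ?thesis
      proof (cases "y > pstar")
        case True
        have "\<forall>z\<in>?R. z < y" using False True by auto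
        then have "Max ?R < y" using fR by (subst Max_less_iff) auto
        then show ?thesis using bR y by auto
      next
        case F2: False
        have "\<forall>z\<in>?R. y < z" using False F2 by auto
        then have "y < Min ?R" using fR by (subst Min_gr_iff) auto
        then show ?thesis using bL y by auto
      qed
    qed
  qed
qed

lemma min_reduce:
  assumes "\<alpha> > 0" "finite P" "min_cost_feasible \<alpha> P s \<rho>" "is_btree P s \<rho> par" "x \<in> P" "0 \<le> v"
    and ch: "\<forall>y\<in>P-{s}. par y = x \<longrightarrow> \<bar>y - x\<bar> \<le> v"
  shows "\<rho> x \<le> v"
proof (rule ccontr)
  assume "\<not> \<rho> x \<le> v"
  then have lt: "v < \<rho> x" by simp
  define \<rho>' where "\<rho>' = \<rho>(x := v)"
  have ra: "range_assignment P \<rho>" using assms(3) unfolding min_cost_feasible_def by simp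
  have ra': "range_assignment P \<rho>'" using ra assms(5,6) unfolding range_assignment_def \<rho>'_def by auto
  have bt: "is_btree P s \<rho>' par"
    using assms(4) ch unfolding is_btree_def \<rho>'_def by auto
  have "cost \<alpha> P \<rho> \<le> cost \<alpha> P \<rho>'"
    using assms(3) ra' bt unfolding min_cost_feasible_def feasible_def by blast
  moreover have "cost \<alpha> P \<rho>' < cost \<alpha> P \<rho>"
  proof -
    have "cost \<alpha> P \<rho> = \<rho> x powr \<alpha> + (\<Sum>p\<in>P-{x}. \<rho> p powr \<alpha>)"
      unfolding cost_def using assms(2,5) by (simp add: sum.remove)
    moreover have "cost \<alpha> P \<rho>' = v powr \<alpha> + (\<Sum>p\<in>P-{x}. \<rho> p powr \<alpha>)"
      unfolding cost_def \<rho>'_def using assms(2,5) by (simp add: sum.remove)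
    moreover have "v powr \<alpha> < \<rho> x powr \<alpha>" using powr_less_mono2[OF assms(1) assms(6) lt] .
    ultimately show ?thesis by simp
  qed
  ultimately show False by simp
qed

lemma opt_props:
  assumes "\<alpha> > 1" "finite P" "s \<in> P" "structured_opt \<alpha> P s \<rho>" "\<not> one_sided P s"
  shows "\<exists>pstar. (\<forall>x\<in>P-{s}. x \<noteq> pstar \<longrightarrow> \<rho> x = 0 \<or> \<rho> x = std_range P s x) \<and>
           (\<forall>x\<in>P-{s}. x = pstar \<longrightarrow> std_range P s x \<le> \<rho> x) \<and> range_assignment P \<rho>"
proof -
  have so: "min_cost_feasible \<alpha> P s \<rho> \<and>
        (\<exists>par pstar. is_btree P s \<rho> par \<and> pstar \<in> P \<and>
          (\<forall>p \<in> P. root_crossing P s par p \<longleftrightarrow> p = pstar) \<and>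
          (\<forall>x \<in> P. x \<noteq> s \<and> on_chain s pstar x \<longrightarrow> par x = pred_pt P s x) \<and>
          (\<forall>x \<in> P. x \<noteq> pstar \<and> \<bar>x - pstar\<bar> \<le> \<rho> pstar \<and> \<not> on_chain s pstar x
                      \<longrightarrow> par x = pstar) \<and>
          (\<forall>x \<in> P. x > Max {y \<in> P. \<bar>y - pstar\<bar> \<le> \<rho> pstar} \<longrightarrow> par x = pred_pt P s x) \<and>
          (\<forall>x \<in> P. x < Min {y \<in> P. \<bar>y - pstar\<bar> \<le> \<rho> pstar} \<longrightarrow> par x = pred_pt P s x))"
    using assms(4) unfolding structured_opt_def if_not_P[OF assms(5)] .
  have mcf: "min_cost_feasible \<alpha> P s \<rho>" using so by (rule conjunct1)
  obtain par pstar where bt: "is_btree P s \<rho> par" and ps: "pstar \<in> P"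
    and ch: "\<forall>x\<in>P. x \<noteq> s \<and> on_chain s pstar x \<longrightarrow> par x = pred_pt P s x"
    and re: "\<forall>x\<in>P. x \<noteq> pstar \<and> \<bar>x - pstar\<bar> \<le> \<rho> pstar \<and> \<not> on_chain s pstar x \<longrightarrow> par x = pstar"
    and bR: "\<forall>x\<in>P. x > Max {y\<in>P. \<bar>y - pstar\<bar> \<le> \<rho> pstar} \<longrightarrow> par x = pred_pt P s x"
    and bL: "\<forall>x\<in>P. x < Min {y\<in>P. \<bar>y - pstar\<bar> \<le> \<rho> pstar} \<longrightarrow> par x = pred_pt P s x"
    using conjunct2[OF so] by (elim exE conjE) blast
  have ra: "range_assignment P \<rho>" using mcf unfolding min_cost_feasible_def by (rule conjunct1)
  then have nn: "\<And>x. x \<in> P \<Longrightarrow> 0 \<le> \<rho> x" unfolding range_assignment_def by auto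
  have K: "\<And>y. y \<in> P \<Longrightarrow> y \<noteq> s \<Longrightarrow> par y = pred_pt P s y \<or> par y = pstar"
    using par_cases[OF assms(2) bt ps nn[OF ps] ch re bR bL] by blast
  have edge: "\<And>y. y \<in> P \<Longrightarrow> y \<noteq> s \<Longrightarrow> par y \<in> P \<and> \<bar>y - par y\<bar> \<le> \<rho> (par y)"
    using bt unfolding is_btree_def by blast
  have a0: "\<alpha> > 0" using assms(1) by simp
  have P1: "\<rho> x = 0 \<or> \<rho> x = std_range P s x" if x: "x \<in> P" "x \<noteq> s" "x \<noteq> pstar" for x
  proof (cases "\<exists>y\<in>P-{s}. par y = x")
    case True
    then obtain y where y: "y \<in> P" "y \<noteq> s" "par y = x" by auto
    have "par y = pred_pt P s y" using K[OF y(1,2)] y(3) x(3) by auto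
    then have st: "std_range P s x = \<bar>y - x\<bar>" using pred_std[OF assms(2,3) x(1) y(1) x(2) y(2)] y(3) by simp
    have ge: "std_range P s x \<le> \<rho> x" using edge[OF y(1,2)] y(3) st by simp
    have "\<rho> x \<le> std_range P s x"
    proof (rule min_reduce[OF a0 assms(2) mcf bt x(1) std_nonneg], intro ballI impI)
      fix y' assume y': "y' \<in> P - {s}" "par y' = x"
      have "par y' = pred_pt P s y'" using K y' x(3) by auto
      then show "\<bar>y' - x\<bar> \<le> std_range P s x" using pred_std[OF assms(2,3) x(1) _ x(2), of y'] y' by simp
    qed
    then show ?thesis using ge by simp
  next
    case False
    have "\<rho> x \<le> 0" by (rule min_reduce[OF a0 assms(2) mcf bt x(1)]) (use False in auto)
    then show ?thesis using nn[OF x(1)] by simp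
  qed
  have P2: "std_range P s pstar \<le> \<rho> pstar" if ps_s: "pstar \<noteq> s"
  proof (cases "std_range P s pstar > 0")
    case False then show ?thesis using nn[OF ps] by simp
  next
    case True
    obtain y where y: "y \<in> P" "y \<noteq> s" "pred_pt P s y = pstar" "\<bar>y - pstar\<bar> = std_range P s pstar"
      using succ_exists[OF assms(2,3) ps ps_s True] by auto
    have "par y = pstar" using K[OF y(1,2)] y(3) by auto
    then show ?thesis using edge[OF y(1,2)] y(4) by simp
  qed
  show ?thesis by (rule exI[of _ pstar]) (use P1 P2 ra in blast)
qed

definition good_asg :: "nat \<Rightarrow> real set \<Rightarrow> real \<Rightarrow> (real \<Rightarrow> real) \<Rightarrow> bool" where
  "good_asg k P s \<rho> \<longleftrightarrow> (\<exists>pstar Zk. finite Zk \<and> card Zk \<le> k \<and> (\<forall>x. x \<notin> P \<longrightarrow> \<rho> x = 0) \<and>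
     (\<forall>x\<in>P-{s}. 0 \<le> \<rho> x) \<and> (\<forall>x\<in>P-{s}. x \<in> Zk \<or> std_range P s x \<le> \<rho> x) \<and>
     (\<forall>x\<in>P-{s,pstar}. \<rho> x \<le> std_range P s x))"

lemma canonical_good:
  assumes "\<alpha> > 1" "finite P" "s \<in> P" "canonical \<alpha> k P s \<rho>"
  shows "good_asg k P s \<rho>"
proof -
  obtain \<rho>opt where so: "structured_opt \<alpha> P s \<rho>opt" and
    cs: "if one_sided P s then \<rho> = \<rho>opt
        else (\<exists>Zk. valid_Zk k P s (zero_pts P s \<rho>opt) Zk \<and>
               \<rho> = (\<lambda>p. if p \<in> zero_pts P s \<rho>opt - Zk then std_range P s p else \<rho>opt p))"
    using assms(4) unfolding canonical_def by blast
  show ?thesis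
  proof (cases "one_sided P s")
    case True
    have r1: "\<rho>opt = std_assignment P s" using so unfolding structured_opt_def if_P[OF True] .
    have r2: "\<rho> = \<rho>opt" using cs unfolding if_P[OF True] .
    have r: "\<rho> = std_assignment P s" using r1 r2 by simp
    have "\<forall>x. x \<notin> P \<longrightarrow> \<rho> x = 0"
    proof (intro allI impI)
      fix x assume "x \<notin> P"
      then have "x \<noteq> s" using assms(3) by blast
      then have "\<rho> x = std_range P s x" using r unfolding std_assignment_def by simp
      then show "\<rho> x = 0" using \<open>x \<notin> P\<close> unfolding std_range_def by simp
    qed
    moreover have e: "\<forall>x\<in>P-{s}. \<rho> x = std_range P s x"
    proof
      fix x assume "x \<in> P - {s}"
      then have "x \<noteq> s" by blast
      then show "\<rho> x = std_range P s x" using r unfolding std_assignment_def by simp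
    qed
    moreover have "\<forall>x\<in>P-{s}. 0 \<le> \<rho> x" using e std_nonneg by simp
    moreover have "\<forall>x\<in>P-{s}. x \<in> {} \<or> std_range P s x \<le> \<rho> x" using e by simp
    moreover have "\<forall>x\<in>P-{s,s}. \<rho> x \<le> std_range P s x" using e by simp
    ultimately show ?thesis unfolding good_asg_def
      by (intro exI[of _ s] exI[of _ "{}::real set"] conjI) simp_all
  next
    case False
    obtain Zk where vz: "valid_Zk k P s (zero_pts P s \<rho>opt) Zk" and
      r: "\<rho> = (\<lambda>p. if p \<in> zero_pts P s \<rho>opt - Zk then std_range P s p else \<rho>opt p)"
      using cs False by auto
    obtain pstar where
      o1: "\<forall>x\<in>P-{s}. x \<noteq> pstar \<longrightarrow> \<rho>opt x = 0 \<or> \<rho>opt x = std_range P s x" and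
      o2: "\<forall>x\<in>P-{s}. x = pstar \<longrightarrow> std_range P s x \<le> \<rho>opt x" and
      ra: "range_assignment P \<rho>opt"
      using opt_props[OF assms(1-3) so False] by blast
    let ?Z = "zero_pts P s \<rho>opt"
    have fZ: "finite ?Z" using assms(2) unfolding zero_pts_def by auto
    have sub: "Zk \<subseteq> ?Z" using vz unfolding valid_Zk_def by simp
    have fZk: "finite Zk" using rev_finite_subset[OF fZ sub] .
    have cZk: "card Zk \<le> k"
      using vz unfolding valid_Zk_def by (cases "card ?Z \<le> k") auto
    have g1: "\<forall>x. x \<notin> P \<longrightarrow> \<rho> x = 0"
    proof (intro allI impI)
      fix x assume xP: "x \<notin> P"
      then have "x \<notin> ?Z" unfolding zero_pts_def by blast
      then have "\<rho> x = \<rho>opt x" using r by simp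
      then show "\<rho> x = 0" using ra xP unfolding range_assignment_def by simp
    qed
    have g2: "\<forall>x\<in>P-{s}. 0 \<le> \<rho> x"
    proof
      fix x assume xP: "x \<in> P - {s}"
      show "0 \<le> \<rho> x"
      proof (cases "x \<in> ?Z - Zk")
        case True then show ?thesis using r std_nonneg by simp
      next
        case False
        then have "\<rho> x = \<rho>opt x" by (simp only: r False if_False)
        then show ?thesis using ra xP unfolding range_assignment_def by simp
      qed
    qed
    have g3: "\<forall>x\<in>P-{s}. x \<in> Zk \<or> std_range P s x \<le> \<rho> x"
    proof
      fix x assume x: "x \<in> P - {s}"
      show "x \<in> Zk \<or> std_range P s x \<le> \<rho> x"
      proof (cases "x \<in> ?Z - Zk")
        case True then show ?thesis using r True by simp
      next
        case nz: False
        show ?thesis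
        proof (cases "x \<in> Zk")
          case True then show ?thesis by simp
        next
          case False
          have rx1: "\<rho> x = \<rho>opt x" by (simp only: r nz if_False)
          have rx2: "x \<notin> ?Z" using nz False by blast
          note rx = rx1 rx2
          show ?thesis
          proof (cases "x = pstar")
            case True then show ?thesis using o2 x rx by auto
          next
            case xp: False
            then have "\<rho>opt x = 0 \<or> \<rho>opt x = std_range P s x" using o1 x by auto
            then show ?thesis
            proof
              assume z: "\<rho>opt x = 0"
              then have "is_extreme P s x" using rx(2) x unfolding zero_pts_def by auto
              then have "std_range P s x = 0" unfolding std_range_def by simp
              then show ?thesis using rx z by simp
            qed (use rx in simp)
          qed
        qed
      qed
    qed
    have g4: "\<forall>x\<in>P-{s,pstar}. \<rho> x \<le> std_range P s x"
    proof
      fix x assume x: "x \<in> P - {s, pstar}"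
      show "\<rho> x \<le> std_range P s x"
      proof (cases "x \<in> ?Z - Zk")
        case True then show ?thesis using r True by simp
      next
        case False
        then have "\<rho> x = \<rho>opt x" by (simp only: r False if_False)
        moreover have "\<rho>opt x = 0 \<or> \<rho>opt x = std_range P s x" using o1 x by auto
        ultimately show ?thesis using std_nonneg[of P s x] by auto
      qed
    qed
    show ?thesis unfolding good_asg_def
      by (rule exI[of _ pstar], rule exI[of _ Zk]) (intro conjI fZk cZk g1 g2 g3 g4)
  qed
qed

theorem lemma1:
  fixes \<alpha> :: real and k :: nat and P :: "real set" and s q :: real
    and \<rho>old \<rho>new :: "real \<Rightarrow> real"
  assumes "\<alpha> > 1" and "finite P" and "s \<in> P" and "q \<notin> P"
    and "canonical \<alpha> k P s \<rho>old"
    and "canonical \<alpha> k (insert q P) s \<rho>new"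
  shows "card {p \<in> insert q P. \<rho>new p > \<rho>old p} \<le> k + 3 \<and>
         card {p \<in> insert q P. \<rho>new p < \<rho>old p} \<le> k + 3"
proof -
  let ?P' = "insert q P"
  have fP': "finite ?P'" and sP': "s \<in> ?P'" using assms by auto
  have qs: "q \<noteq> s" using assms by auto
  obtain po Zo where fZo: "finite Zo" and cZo: "card Zo \<le> k"
    and o1: "\<forall>x. x \<notin> P \<longrightarrow> \<rho>old x = 0"
    and o3: "\<forall>x\<in>P-{s}. x \<in> Zo \<or> std_range P s x \<le> \<rho>old x"
    and o4: "\<forall>x\<in>P-{s,po}. \<rho>old x \<le> std_range P s x"
    using canonical_good[OF assms(1,2,3,5)] unfolding good_asg_def by blast
  obtain pn Zn where fZn: "finite Zn" and cZn: "card Zn \<le> k"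
    and n2: "\<forall>x\<in>?P'-{s}. 0 \<le> \<rho>new x"
    and n3: "\<forall>x\<in>?P'-{s}. x \<in> Zn \<or> std_range ?P' s x \<le> \<rho>new x"
    and n4: "\<forall>x\<in>?P'-{s,pn}. \<rho>new x \<le> std_range ?P' s x"
    using canonical_good[OF assms(1) fP' sP' assms(6)] unfolding good_asg_def by blast
  have oq: "\<rho>old q = 0" using o1 assms(4) by blast
  have nq: "0 \<le> \<rho>new q" using n2 qs by blast
  define T1 where "T1 = {x\<in>P-{s}. std_range ?P' s x > std_range P s x}"
  define T2 where "T2 = {x\<in>P-{s}. std_range ?P' s x < std_range P s x}"
  have cT1: "card T1 \<le> 1" unfolding T1_def using T1_card[OF assms(2,3,4)] .
  have cT2: "card T2 \<le> 1" unfolding T2_def using T2_card[OF assms(2,3,4)] .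
  have fT1: "finite T1" "finite T2" unfolding T1_def T2_def using assms(2) by auto
  have T1q: "T1 \<noteq> {} \<Longrightarrow> std_range ?P' s q = 0" unfolding T1_def using T1_q[OF assms(2,3,4)] by blast
  define W where "W = (if T1 = {} then {q} else T1)"
  have fW: "finite W" and cW: "card W \<le> 1" using fT1 cT1 unfolding W_def by auto
  have sub1: "{p \<in> ?P'. \<rho>new p > \<rho>old p} \<subseteq> Zo \<union> {s, pn} \<union> W"
  proof
    fix x assume x: "x \<in> {p \<in> ?P'. \<rho>new p > \<rho>old p}"
    show "x \<in> Zo \<union> {s, pn} \<union> W"
    proof (rule ccontr)
      assume nx: "x \<notin> Zo \<union> {s, pn} \<union> W"
      show False
      proof (cases "x = q")
        case True
        show False
        proof (cases "T1 = {}")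
          case True then show False using nx \<open>x = q\<close> unfolding W_def by simp
        next
          case False
          have "\<rho>new q \<le> std_range ?P' s q" using n4 nx \<open>x = q\<close> by auto
          then show False using T1q[OF False] oq x \<open>x = q\<close> by simp
        qed
      next
        case False
        then have xP: "x \<in> P" using x by auto
        have a: "std_range P s x \<le> \<rho>old x" using o3 xP nx by auto
        have b: "\<rho>new x \<le> std_range ?P' s x" using n4 xP nx by auto
        have "x \<in> T1" unfolding T1_def using a b x xP nx by auto
        then have "x \<in> W" unfolding W_def by auto
        then show False using nx by simp
      qed
    qed
  qed
  have sub2: "{p \<in> ?P'. \<rho>new p < \<rho>old p} \<subseteq> Zn \<union> {s, po} \<union> T2"
  proof
    fix x assume x: "x \<in> {p \<in> ?P'. \<rho>new p < \<rho>old p}"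
    show "x \<in> Zn \<union> {s, po} \<union> T2"
    proof (rule ccontr)
      assume nx: "x \<notin> Zn \<union> {s, po} \<union> T2"
      show False
      proof (cases "x = q")
        case True then show False using oq nq x by simp
      next
        case False
        then have xP: "x \<in> P" using x by auto
        have a: "\<rho>old x \<le> std_range P s x" using o4 xP nx by auto
        have b: "std_range ?P' s x \<le> \<rho>new x" using n3 xP nx by auto
        have "x \<in> T2" unfolding T2_def using a b x xP nx by auto
        then show False using nx by simp
      qed
    qed
  qed
  have c1: "card (Zo \<union> {s, pn} \<union> W) \<le> k + 3"
  proof -
    have "card (Zo \<union> {s, pn} \<union> W) \<le> card (Zo \<union> {s, pn}) + card W" by (rule card_Un_le)
    also have "card (Zo \<union> {s, pn}) \<le> card Zo + card {s, pn}" by (rule card_Un_le)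
    also have "card {s, pn} \<le> 2" by (simp add: card_insert_le_m1)
    finally show ?thesis using cZo cW by simp
  qed
  have c2: "card (Zn \<union> {s, po} \<union> T2) \<le> k + 3"
  proof -
    have "card (Zn \<union> {s, po} \<union> T2) \<le> card (Zn \<union> {s, po}) + card T2" by (rule card_Un_le)
    also have "card (Zn \<union> {s, po}) \<le> card Zn + card {s, po}" by (rule card_Un_le)
    also have "card {s, po} \<le> 2" by (simp add: card_insert_le_m1)
    finally show ?thesis using cZn cT2 by simp
  qed
  have "card {p \<in> ?P'. \<rho>new p > \<rho>old p} \<le> card (Zo \<union> {s, pn} \<union> W)"
    by (rule card_mono) (use fZo fW sub1 in auto)
  moreover have "card {p \<in> ?P'. \<rho>new p < \<rho>old p} \<le> card (Zn \<union> {s, po} \<union> T2)"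
    by (rule card_mono) (use fZn fT1 sub2 in auto)
  ultimately show ?thesis using c1 c2 by linarith
qed

end
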